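(* Let $\{z_n\}_{n\ge 0}$ be a sequence of positive real numbers satisfying $az_{n+1}=bz_n+cz_{n-1}$ for $n\ge 1$, where $a,b,c$ are positive constants. If $z_0z_2\ge z_1^2$, then $\{z_{2n}\}_{n\ge 0}$ is log-convex and $\{z_{2n+1}\}_{n\ge 0}$ is log-concave. If $z_0z_2\le z_1^2$, then $\{z_{2n}\}_{n\ge 0}$ is log-concave and $\{z_{2n+1}\}_{n\ge 0}$ is log-convex.
   Context: A sequence $a_0,a_1,\ldots$ of nonnegative reals is log-convex (resp. log-concave) if $a_{k-1}a_{k+1}\ge a_k^2$ (resp. $\le$) for all $k\ge 1$. *)

theory Defs
  imports Complex_Main
begin

definition log_convex :: "(nat \<Rightarrow> real) \<Rightarrow> bool" where
  "log_convex a \<longleftrightarrow> (\<forall>k. 0 \<le> a k) \<and> (\<forall>k\<ge>1. a (k - 1) * a (k + 1) \<ge> (a k)\<^sup>2)"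

definition log_concave :: "(nat \<Rightarrow> real) \<Rightarrow> bool" where
  "log_concave a \<longleftrightarrow> (\<forall>k. 0 \<le> a k) \<and> (\<forall>k\<ge>1. a (k - 1) * a (k + 1) \<le> (a k)\<^sup>2)"

end

theory Submission
  imports Defs
begin

theorem corollary3p17:
  fixes z :: "nat \<Rightarrow> real" and a b c :: real
  assumes pos: "\<And>n. z n > 0"
    and abc: "a > 0" "b > 0" "c > 0"
    and rec: "\<And>n. n \<ge> 1 \<Longrightarrow> a * z (n + 1) = b * z n + c * z (n - 1)"
  shows "(z 0 * z 2 \<ge> (z 1)\<^sup>2 \<longrightarrow>
            log_convex (\<lambda>n. z (2 * n)) \<and> log_concave (\<lambda>n. z (2 * n + 1)))
       \<and> (z 0 * z 2 \<le> (z 1)\<^sup>2 \<longrightarrow>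
            log_concave (\<lambda>n. z (2 * n)) \<and> log_convex (\<lambda>n. z (2 * n + 1)))"
proof -
  define d where "d n = z n * z (n+2) - (z (n+1))\<^sup>2" for n
  have r: "z (n+2) = (b * z (n+1) + c * z n) / a" for n
    using rec[of "n+1"] abc by (simp add: field_simps)
  have dstep: "a * d (n+1) = - c * d n" for n
  proof -
    define x0 where "x0 = z n"
    define x1 where "x1 = z (n+1)"
    define x2 where "x2 = z (n+2)"
    define x3 where "x3 = z (n+3)"
    have h2: "a * x2 = b * x1 + c * x0" using rec[of "n+1"] unfolding x0_def x1_def x2_def by (simp add: eval_nat_numeral)
    have h3: "a * x3 = b * x2 + c * x1" using rec[of "n+2"] unfolding x3_def x1_def x2_def by (simp add: eval_nat_numeral)
    have "a * (x1 * x3 - x2^2) = - c * (x0 * x2 - x1^2)"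
    proof -
      have "a * (x1 * x3 - x2^2) = x1 * (a*x3) - x2 * (a*x2)" by (simp add: algebra_simps power2_eq_square)
      also have "\<dots> = - c * (x0 * x2 - x1^2)" unfolding h2 h3 by (simp add: algebra_simps power2_eq_square)
      finally show ?thesis .
    qed
    then show ?thesis unfolding d_def x0_def x1_def x2_def x3_def by (simp add: eval_nat_numeral)
  qed
  have estep: "a * c * (z n * z (n+4) - (z (n+2))\<^sup>2) = - (b^2) * d (n+1)" for n
  proof -
    define x0 where "x0 = z n"
    define x1 where "x1 = z (n+1)"
    define x2 where "x2 = z (n+2)"
    define x3 where "x3 = z (n+3)"
    define x4 where "x4 = z (n+4)"
    have h2: "a * x2 = b * x1 + c * x0" using rec[of "n+1"] unfolding x0_def x1_def x2_def by (simp add: eval_nat_numeral)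
    have h3: "a * x3 = b * x2 + c * x1" using rec[of "n+2"] unfolding x3_def x1_def x2_def by (simp add: eval_nat_numeral)
    have h4: "a * x4 = b * x3 + c * x2" using rec[of "n+3"] unfolding x3_def x4_def x2_def by (simp add: eval_nat_numeral)
    have e2: "x2 = (b * x1 + c * x0) / a" using h2 abc by (simp add: field_simps)
    have e3: "x3 = (b * x2 + c * x1) / a" using h3 abc by (simp add: field_simps)
    have e4: "x4 = (b * x3 + c * x2) / a" using h4 abc by (simp add: field_simps)
    have "a * c * (x0 * x4 - x2^2) = - (b^2) * (x1 * x3 - x2^2)"
      unfolding e4 unfolding e3 unfolding e2 using abc by (simp add: field_simps power2_eq_square)
    then show ?thesis unfolding d_def x0_def x1_def x2_def x3_def x4_def by (simp add: eval_nat_numeral)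
  qed
  have flip1: "d n \<ge> 0 \<Longrightarrow> d (n+1) \<le> 0" for n
  proof -
    assume "d n \<ge> 0"
    then have "c * d n \<ge> 0" using abc by simp
    then have "a * d (n+1) \<le> 0" using dstep[of n] by simp
    then show ?thesis using abc by (simp add: mult_le_0_iff)
  qed
  have flip2: "d n \<le> 0 \<Longrightarrow> d (n+1) \<ge> 0" for n
  proof -
    assume "d n \<le> 0"
    then have "c * d n \<le> 0" using abc by (simp add: mult_le_0_iff)
    then have "a * d (n+1) \<ge> 0" using dstep[of n] by simp
    then show ?thesis using abc by (simp add: zero_le_mult_iff)
  qed
  have sg: "(d 0 \<ge> 0 \<longrightarrow> d (2*k) \<ge> 0 \<and> d (2*k+1) \<le> 0) \<and> (d 0 \<le> 0 \<longrightarrow> d (2*k) \<le> 0 \<and> d (2*k+1) \<ge> 0)" for k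
  proof (induction k)
    case 0 then show ?case using flip1[of 0] flip2[of 0] by simp
  next
    case (Suc k)
    have "2 * Suc k = 2*k+1+1" by simp
    then show ?case using Suc flip1[of "2*k+1"] flip2[of "2*k+1"] flip1[of "2*k+2"] flip2[of "2*k+2"]
      by (simp add: eval_nat_numeral)
  qed
  have ac: "a * c > 0" using abc by simp
  have esign1: "d (n+1) \<le> 0 \<Longrightarrow> z n * z (n+4) \<ge> (z (n+2))\<^sup>2" for n
  proof -
    assume h: "d (n+1) \<le> 0"
    have "- (b^2) * d (n+1) \<ge> 0" using h using mult_nonneg_nonpos[of "b^2" "d (n+1)"] by simp
    then have "a * c * (z n * z (n+4) - (z (n+2))\<^sup>2) \<ge> 0" using estep[of n] by simp
    then show ?thesis using ac by (simp add: zero_le_mult_iff)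
  qed
  have esign2: "d (n+1) \<ge> 0 \<Longrightarrow> z n * z (n+4) \<le> (z (n+2))\<^sup>2" for n
  proof -
    assume h: "d (n+1) \<ge> 0"
    have "- (b^2) * d (n+1) \<le> 0" using h using mult_nonneg_nonneg[of "b^2" "d (n+1)"] by simp
    then have "a * c * (z n * z (n+4) - (z (n+2))\<^sup>2) \<le> 0" using estep[of n] by simp
    then show ?thesis using ac abc by (simp add: mult_le_0_iff)
  qed
  have d0: "d 0 = z 0 * z 2 - (z 1)\<^sup>2" unfolding d_def by (simp add: numeral_2_eq_2)
  show ?thesis
    unfolding log_convex_def log_concave_def
  proof (intro conjI impI allI)
    show "0 \<le> z (2*k)" "0 \<le> z (2*k)" "0 \<le> z (2*k+1)" "0 \<le> z (2*k+1)" for k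
      using pos[of "2*k"] pos[of "2*k+1"] by auto
  next
    fix k :: nat assume h: "z 0 * z 2 \<ge> (z 1)\<^sup>2" and k: "1 \<le> k"
    obtain m where m: "k = Suc m" using k by (cases k) auto
    have "d (2*m+1) \<le> 0" using sg[of m] h d0 by simp
    then have "z (2*m) * z (2*m+4) \<ge> (z (2*m+2))\<^sup>2" using esign1[of "2*m"] by simp
    moreover have "2*(k-1) = 2*m" "2*(k+1) = 2*m+4" "2*k = 2*m+2" using m by auto
    ultimately show "z (2*(k-1)) * z (2*(k+1)) \<ge> (z (2*k))\<^sup>2" by metis
  next
    fix k :: nat assume h: "z 0 * z 2 \<ge> (z 1)\<^sup>2" and k: "1 \<le> k"
    obtain m where m: "k = Suc m" using k by (cases k) auto
    have "d (2*k) \<ge> 0" using sg[of k] h d0 by simp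
    moreover have "2*k = 2*m+1+1" using m by simp
    ultimately have "d (2*m+1+1) \<ge> 0" by metis
    then have "z (2*m+1) * z (2*m+1+4) \<le> (z (2*m+1+2))\<^sup>2" using esign2[of "2*m+1"] by blast
    moreover have "2*(k-1)+1 = 2*m+1" "2*(k+1)+1 = 2*m+1+4" "2*k+1 = 2*m+1+2" using m by auto
    ultimately show "z (2*(k-1)+1) * z (2*(k+1)+1) \<le> (z (2*k+1))\<^sup>2" by metis
  next
    fix k :: nat assume h: "z 0 * z 2 \<le> (z 1)\<^sup>2" and k: "1 \<le> k"
    obtain m where m: "k = Suc m" using k by (cases k) auto
    have "d (2*m+1) \<ge> 0" using sg[of m] h d0 by simp
    then have "z (2*m) * z (2*m+4) \<le> (z (2*m+2))\<^sup>2" using esign2[of "2*m"] by simp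
    moreover have "2*(k-1) = 2*m" "2*(k+1) = 2*m+4" "2*k = 2*m+2" using m by auto
    ultimately show "z (2*(k-1)) * z (2*(k+1)) \<le> (z (2*k))\<^sup>2" by metis
  next
    fix k :: nat assume h: "z 0 * z 2 \<le> (z 1)\<^sup>2" and k: "1 \<le> k"
    obtain m where m: "k = Suc m" using k by (cases k) auto
    have "d (2*k) \<le> 0" using sg[of k] h d0 by simp
    moreover have "2*k = 2*m+1+1" using m by simp
    ultimately have "d (2*m+1+1) \<le> 0" by metis
    then have "z (2*m+1) * z (2*m+1+4) \<ge> (z (2*m+1+2))\<^sup>2" using esign1[of "2*m+1"] by blast
    moreover have "2*(k-1)+1 = 2*m+1" "2*(k+1)+1 = 2*m+1+4" "2*k+1 = 2*m+1+2" using m by auto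
    ultimately show "z (2*(k-1)+1) * z (2*(k+1)+1) \<ge> (z (2*k+1))\<^sup>2" by metis
  qed
qed

end
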